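(* Every passivization-covariant operation $\mathcal Q$ maps passive states to (nonnegative multiples of) passive states: for every $\tau\in\mathsf P(S)$, $\mathcal Q(\tau)=c\,\tau'$ for some $c\ge0$ and $\tau'\in\mathsf P(S)$. Moreover, every energy-preserving channel is passivization-covariant.
   Context: $S$ is a $d$-dimensional quantum system with non-degenerate Hamiltonian $H=\sum_i E_i|i\rangle\langle i|$, $E_1<\dots<E_d$. $\mathsf P(S)$ is the set of passive states, i.e. density matrices $\sum_ip_i|i\rangle\langle i|$ with $p_1\ge\dots\ge p_d$. Let $\tau_j=\frac1j\sum_{i=1}^j|i\rangle\langle i|$ and let the canonical passivization be the channel $\Pi(\rho)=\sum_{i=1}^d\langle i|\rho|i\rangle\,\tau_i$. A passivization-covariant operation is a completely positive trace-non-increasing map $\mathcal Q$ with $\mathcal Q\circ\Pi=\Pi\circ\mathcal Q$. An energy-preserving channel is a CPTP map $\mathcal E$ with $\langle i|\mathcal E(\rho)|i\rangle=\langle i|\rho|i\rangle$ for all $\rho$ and $i$. *)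

theory Defs
  imports Complex_Main "Jordan_Normal_Form.Matrix"
begin

text \<open>Operators on the d-dimensional system are complex d x d matrices (carrier_mat d d);
  the energy eigenbasis |1>,...,|d> is the standard basis, indexed 0,...,d-1 (so that
  E_0 < ... < E_(d-1)).\<close>

definition mtrace :: "complex mat \<Rightarrow> complex" where
  "mtrace A = (\<Sum>i<dim_row A. A $$ (i, i))"

definition psd :: "nat \<Rightarrow> complex mat \<Rightarrow> bool" where
  "psd n A \<longleftrightarrow> A \<in> carrier_mat n n \<and>
     (\<forall>v \<in> carrier_vec n.
        let z = (\<Sum>i<n. \<Sum>j<n. cnj (v $ i) * A $$ (i, j) * v $ j) in Im z = 0 \<and> Re z \<ge> 0)"

definition density :: "nat \<Rightarrow> complex mat \<Rightarrow> bool" where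
  "density d \<rho> \<longleftrightarrow> psd d \<rho> \<and> mtrace \<rho> = 1"

definition passive_state :: "nat \<Rightarrow> complex mat \<Rightarrow> bool" where
  "passive_state d \<rho> \<longleftrightarrow> density d \<rho> \<and>
     (\<exists>p :: nat \<Rightarrow> real. \<rho> = mat d d (\<lambda>(i, j). if i = j then complex_of_real (p i) else 0)
        \<and> (\<forall>i j. i \<le> j \<and> j < d \<longrightarrow> p j \<le> p i))"

text \<open>tau_k = 1/(k+1) * sum_{i \<le> k} |i><i|  (0-indexed version of tau_j, j = k+1).\<close>
definition tau :: "nat \<Rightarrow> nat \<Rightarrow> complex mat" where
  "tau d k = mat d d (\<lambda>(i, j). if i = j \<and> i \<le> k then 1 / of_nat (k + 1) else 0)"

definition passivization :: "nat \<Rightarrow> complex mat \<Rightarrow> complex mat" where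
  "passivization d \<rho> = mat d d (\<lambda>(i, j). \<Sum>k<d. \<rho> $$ (k, k) * tau d k $$ (i, j))"

definition lin_map :: "nat \<Rightarrow> (complex mat \<Rightarrow> complex mat) \<Rightarrow> bool" where
  "lin_map d Q \<longleftrightarrow>
     (\<forall>A \<in> carrier_mat d d. Q A \<in> carrier_mat d d) \<and>
     (\<forall>A \<in> carrier_mat d d. \<forall>B \<in> carrier_mat d d. Q (A + B) = Q A + Q B) \<and>
     (\<forall>A \<in> carrier_mat d d. \<forall>c. Q (c \<cdot>\<^sub>m A) = c \<cdot>\<^sub>m Q A)"

text \<open>(id_n \<otimes> Q) acting on an (n d) x (n d) matrix on C^n \<otimes> C^d, with basis
  |a>|i> indexed by a*d+i: each d x d block is mapped by Q.\<close>
definition ampliate :: "nat \<Rightarrow> nat \<Rightarrow> (complex mat \<Rightarrow> complex mat) \<Rightarrow> complex mat \<Rightarrow> complex mat" where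
  "ampliate d n Q M = mat (n * d) (n * d) (\<lambda>(r, c).
      Q (mat d d (\<lambda>(i, j). M $$ ((r div d) * d + i, (c div d) * d + j))) $$ (r mod d, c mod d))"

definition completely_positive :: "nat \<Rightarrow> (complex mat \<Rightarrow> complex mat) \<Rightarrow> bool" where
  "completely_positive d Q \<longleftrightarrow> lin_map d Q \<and>
     (\<forall>n M. psd (n * d) M \<longrightarrow> psd (n * d) (ampliate d n Q M))"

definition operation :: "nat \<Rightarrow> (complex mat \<Rightarrow> complex mat) \<Rightarrow> bool" where
  "operation d Q \<longleftrightarrow> completely_positive d Q \<and>
     (\<forall>\<rho>. psd d \<rho> \<longrightarrow> Re (mtrace (Q \<rho>)) \<le> Re (mtrace \<rho>))"

definition channel :: "nat \<Rightarrow> (complex mat \<Rightarrow> complex mat) \<Rightarrow> bool" where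
  "channel d Q \<longleftrightarrow> completely_positive d Q \<and>
     (\<forall>A \<in> carrier_mat d d. mtrace (Q A) = mtrace A)"

definition passivization_covariant :: "nat \<Rightarrow> (complex mat \<Rightarrow> complex mat) \<Rightarrow> bool" where
  "passivization_covariant d Q \<longleftrightarrow> operation d Q \<and>
     (\<forall>A \<in> carrier_mat d d. Q (passivization d A) = passivization d (Q A))"

definition energy_preserving :: "nat \<Rightarrow> (complex mat \<Rightarrow> complex mat) \<Rightarrow> bool" where
  "energy_preserving d E \<longleftrightarrow> channel d E \<and>
     (\<forall>\<rho> i. density d \<rho> \<and> i < d \<longrightarrow> E \<rho> $$ (i, i) = \<rho> $$ (i, i))"

end

theory Submission
  imports Defs
begin

lemma real_lin_nonneg_zero:
  fixes a b :: real
  assumes "\<And>s. a * s + b \<ge> 0"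
  shows "a = 0"
proof (rule ccontr)
  assume "a \<noteq> 0"
  have "a * (-(\<bar>b\<bar>+1)/a) + b \<ge> 0" by (rule assms)
  moreover have "a * (-(\<bar>b\<bar>+1)/a) = -(\<bar>b\<bar>+1)" using \<open>a\<noteq>0\<close> by simp
  ultimately show False by linarith
qed

lemma sum_delta_mult:
  fixes f :: "nat \<Rightarrow> complex"
  assumes "j < d"
  shows "(\<Sum>t<d. f t * (if t = j then x else 0)) = f j * x"
proof -
  have "(\<Sum>t<d. f t * (if t = j then x else 0)) = (\<Sum>t<d. if t = j then f j * x else 0)"
    by (rule sum.cong) auto
  also have "\<dots> = f j * x" using assms by simp
  finally show ?thesis .
qed

lemma sum_delta_mult2:
  fixes f :: "nat \<Rightarrow> complex"
  assumes "j < d"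
  shows "(\<Sum>t<d. (if t = j then x else 0) * f t) = x * f j"
  using sum_delta_mult[OF assms, of f x] by (simp add: mult.commute)

lemma psd_diag_entry:
  assumes "psd d A" "j < d"
  shows "Im (A $$ (j,j)) = 0 \<and> Re (A $$ (j,j)) \<ge> 0"
proof -
  define v where "v = vec d (\<lambda>t. if t = j then (1::complex) else 0)"
  have vc: "v \<in> carrier_vec d" unfolding v_def by simp
  have vi: "\<And>t. t < d \<Longrightarrow> v $ t = (if t = j then 1 else 0)" unfolding v_def by simp
  have "(\<Sum>i<d. \<Sum>t<d. cnj (v $ i) * A $$ (i, t) * v $ t) = (\<Sum>i<d. cnj (v $ i) * A $$ (i, j))"
  proof (rule sum.cong[OF refl])
    fix i assume "i \<in> {..<d}"
    have "(\<Sum>t<d. cnj (v $ i) * A $$ (i, t) * v $ t) = (\<Sum>t<d. (cnj (v $ i) * A $$ (i, t)) * (if t = j then 1 else 0))"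
      by (rule sum.cong) (auto simp: vi)
    also have "\<dots> = cnj (v $ i) * A $$ (i, j)" using sum_delta_mult[OF assms(2)] by simp
    finally show "(\<Sum>t<d. cnj (v $ i) * A $$ (i, t) * v $ t) = cnj (v $ i) * A $$ (i, j)" .
  qed
  also have "\<dots> = (\<Sum>i<d. (if i = j then 1 else 0) * A $$ (i, j))"
    by (rule sum.cong) (auto simp: vi)
  also have "\<dots> = A $$ (j,j)" using sum_delta_mult2[OF assms(2)] by simp
  finally have "(\<Sum>i<d. \<Sum>t<d. cnj (v $ i) * A $$ (i, t) * v $ t) = A $$ (j,j)" .
  moreover have "let z = (\<Sum>i<d. \<Sum>t<d. cnj (v $ i) * A $$ (i, t) * v $ t) in Im z = 0 \<and> Re z \<ge> 0"
    using assms(1) vc unfolding psd_def by blast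
  ultimately show ?thesis by (simp add: Let_def)
qed

lemma psd_two_entry:
  assumes "psd d A" "j < d" "l < d" "j \<noteq> l"
  shows "Im (cnj x * (A $$ (j,j) * x + A $$ (j,l)) + (A $$ (l,j) * x + A $$ (l,l))) = 0 \<and>
         Re (cnj x * (A $$ (j,j) * x + A $$ (j,l)) + (A $$ (l,j) * x + A $$ (l,l))) \<ge> 0"
proof -
  define w where "w = (\<lambda>t::nat. (if t = j then x else 0) + (if t = l then 1 else (0::complex)))"
  define v where "v = vec d w"
  have vc: "v \<in> carrier_vec d" unfolding v_def by simp
  have vi: "\<And>t. t < d \<Longrightarrow> v $ t = w t" unfolding v_def by simp
  have inner: "(\<Sum>t<d. g t * w t) = g j * x + g l" for g :: "nat \<Rightarrow> complex"
  proof -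
    have "(\<Sum>t<d. g t * w t) = (\<Sum>t<d. g t * (if t = j then x else 0)) + (\<Sum>t<d. g t * (if t = l then 1 else 0))"
      unfolding w_def by (simp add: distrib_left sum.distrib)
    also have "\<dots> = g j * x + g l" using sum_delta_mult[OF assms(2)] sum_delta_mult[OF assms(3)] by simp
    finally show ?thesis .
  qed
  have "(\<Sum>i<d. \<Sum>t<d. cnj (v $ i) * A $$ (i, t) * v $ t) = (\<Sum>i<d. cnj (w i) * (A $$ (i, j) * x + A $$ (i, l)))"
  proof (rule sum.cong[OF refl])
    fix i assume i: "i \<in> {..<d}"
    have "(\<Sum>t<d. cnj (v $ i) * A $$ (i, t) * v $ t) = (\<Sum>t<d. (cnj (w i) * A $$ (i, t)) * w t)"
      by (rule sum.cong) (use i in \<open>auto simp: vi\<close>)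
    also have "\<dots> = cnj (w i) * A $$ (i, j) * x + cnj (w i) * A $$ (i, l)" by (rule inner)
    finally show "(\<Sum>t<d. cnj (v $ i) * A $$ (i, t) * v $ t) = cnj (w i) * (A $$ (i, j) * x + A $$ (i, l))"
      by (simp add: algebra_simps)
  qed
  also have "\<dots> = (\<Sum>i<d. (A $$ (i, j) * x + A $$ (i, l)) * cnj (w i))" by (simp add: mult.commute)
  also have "\<dots> = (\<Sum>i<d. (A $$ (i, j) * x + A $$ (i, l)) * ((if i = j then cnj x else 0) + (if i = l then 1 else 0)))"
    by (rule sum.cong) (auto simp: w_def)
  also have "\<dots> = (\<Sum>i<d. (A $$ (i, j) * x + A $$ (i, l)) * (if i = j then cnj x else 0)) + (\<Sum>i<d. (A $$ (i, j) * x + A $$ (i, l)) * (if i = l then 1 else 0))"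
    by (simp add: distrib_left sum.distrib)
  also have "\<dots> = cnj x * (A $$ (j,j) * x + A $$ (j,l)) + (A $$ (l,j) * x + A $$ (l,l))"
    using sum_delta_mult[OF assms(2), of "\<lambda>i. A $$ (i, j) * x + A $$ (i, l)" "cnj x"]
      sum_delta_mult[OF assms(3), of "\<lambda>i. A $$ (i, j) * x + A $$ (i, l)" 1]
    by (simp only:) (simp add: mult.commute)
  finally have eq: "(\<Sum>i<d. \<Sum>t<d. cnj (v $ i) * A $$ (i, t) * v $ t) = cnj x * (A $$ (j,j) * x + A $$ (j,l)) + (A $$ (l,j) * x + A $$ (l,l))" .
  have "let z = (\<Sum>i<d. \<Sum>t<d. cnj (v $ i) * A $$ (i, t) * v $ t) in Im z = 0 \<and> Re z \<ge> 0"
    using assms(1) vc unfolding psd_def by blast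
  then show ?thesis unfolding eq by (simp add: Let_def)
qed

lemma psd_zero_diag:
  assumes "psd d A" "j < d" "l < d" "A $$ (j,j) = 0"
  shows "A $$ (j,l) = 0 \<and> A $$ (l,j) = 0"
proof (cases "j = l")
  case True then show ?thesis using assms by simp
next
  case False
  define a where "a = A $$ (j,l)"
  define b where "b = A $$ (l,j)"
  define c where "c = A $$ (l,l)"
  have H: "\<And>x. Im (cnj x * a + b * x + c) = 0 \<and> Re (cnj x * a + b * x + c) \<ge> 0"
    using psd_two_entry[OF assms(1-3) False] assms(4) unfolding a_def b_def c_def
    by (simp add: algebra_simps)
  have r1: "Re (a + b) * s + Re c \<ge> 0" for s :: real
    using H[of "complex_of_real s"] by (simp add: algebra_simps)
  have r2: "Im (a + b) * s + Im c \<ge> 0" for s :: real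
    using H[of "complex_of_real s"] by (simp add: algebra_simps)
  have r3: "Im (a - b) * s + Re c \<ge> 0" for s :: real
    using H[of "\<i> * complex_of_real s"] by (simp add: algebra_simps)
  have r4: "Re (b - a) * s + Im c \<ge> 0" for s :: real
    using H[of "\<i> * complex_of_real s"] by (simp add: algebra_simps)
  have "Re (a + b) = 0" "Im (a + b) = 0" "Im (a - b) = 0" "Re (b - a) = 0"
    using real_lin_nonneg_zero[OF r1] real_lin_nonneg_zero[OF r2]
      real_lin_nonneg_zero[OF r3] real_lin_nonneg_zero[OF r4] by auto
  then have "a = 0" "b = 0" by (simp_all add: complex_eq_iff)
  then show ?thesis unfolding a_def b_def by simp
qed

definition dmat :: "nat \<Rightarrow> (nat \<Rightarrow> real) \<Rightarrow> complex mat" where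
  "dmat d r = mat d d (\<lambda>(i, j). if i = j then complex_of_real (r i) else 0)"

lemma psd_dmat:
  assumes "\<And>i. i < d \<Longrightarrow> r i \<ge> 0"
  shows "psd d (dmat d r)"
  unfolding psd_def
proof (intro conjI ballI)
  show "dmat d r \<in> carrier_mat d d" unfolding dmat_def by simp
  fix v :: "complex vec" assume "v \<in> carrier_vec d"
  have "(\<Sum>i<d. \<Sum>j<d. cnj (v $ i) * dmat d r $$ (i, j) * v $ j) = (\<Sum>i<d. complex_of_real (r i * (cmod (v $ i))^2))"
  proof (rule sum.cong[OF refl])
    fix i assume i: "i \<in> {..<d}"
    have "(\<Sum>j<d. cnj (v $ i) * dmat d r $$ (i, j) * v $ j) = (\<Sum>j<d. (if j = i then cnj (v $ i) * complex_of_real (r i) * v $ i else 0))"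
      by (rule sum.cong) (use i in \<open>auto simp: dmat_def\<close>)
    also have "\<dots> = cnj (v $ i) * complex_of_real (r i) * v $ i" using i by simp
    also have "\<dots> = complex_of_real (r i) * (v $ i * cnj (v $ i))" by (simp add: algebra_simps)
    also have "\<dots> = complex_of_real (r i * (cmod (v $ i))^2)" by (simp add: complex_norm_square[symmetric])
    finally show "(\<Sum>j<d. cnj (v $ i) * dmat d r $$ (i, j) * v $ j) = complex_of_real (r i * (cmod (v $ i))^2)" .
  qed
  also have "\<dots> = complex_of_real (\<Sum>i<d. r i * (cmod (v $ i))^2)" by simp
  finally have "(\<Sum>i<d. \<Sum>j<d. cnj (v $ i) * dmat d r $$ (i, j) * v $ j) = complex_of_real (\<Sum>i<d. r i * (cmod (v $ i))^2)" .
  moreover have "0 \<le> (\<Sum>i<d. r i * (cmod (v $ i))^2)" by (intro sum_nonneg) (simp add: assms)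
  ultimately show "let z = (\<Sum>i<d. \<Sum>j<d. cnj (v $ i) * dmat d r $$ (i, j) * v $ j) in Im z = 0 \<and> Re z \<ge> 0"
    by (simp add: Let_def)
qed

lemma mtrace_dmat: "mtrace (dmat d r) = complex_of_real (\<Sum>i<d. r i)"
  unfolding mtrace_def dmat_def by simp

definition outer :: "nat \<Rightarrow> (nat \<Rightarrow> complex) \<Rightarrow> complex mat" where
  "outer d u = mat d d (\<lambda>(i, j). u i * cnj (u j))"

lemma outer_carrier: "outer d u \<in> carrier_mat d d" unfolding outer_def by simp

lemma psd_outer:
  assumes "c \<ge> 0"
  shows "psd d (complex_of_real c \<cdot>\<^sub>m outer d u)"
  unfolding psd_def
proof (intro conjI ballI)
  show "complex_of_real c \<cdot>\<^sub>m outer d u \<in> carrier_mat d d" unfolding outer_def by simp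
  fix v :: "complex vec" assume "v \<in> carrier_vec d"
  define w where "w = (\<Sum>i<d. cnj (v $ i) * u i)"
  have "(\<Sum>i<d. \<Sum>j<d. cnj (v $ i) * (complex_of_real c \<cdot>\<^sub>m outer d u) $$ (i, j) * v $ j)
      = (\<Sum>i<d. \<Sum>j<d. complex_of_real c * ((cnj (v $ i) * u i) * cnj (cnj (v $ j) * u j)))"
    by (rule sum.cong[OF refl], rule sum.cong[OF refl]) (auto simp: outer_def algebra_simps)
  also have "\<dots> = complex_of_real c * (\<Sum>i<d. \<Sum>j<d. (cnj (v $ i) * u i) * cnj (cnj (v $ j) * u j))"
    by (simp add: sum_distrib_left)
  also have "\<dots> = complex_of_real c * (w * cnj w)"
    unfolding w_def by (simp only: sum_product cnj_sum)
  also have "\<dots> = complex_of_real (c * (cmod w)^2)" by (simp add: complex_norm_square[symmetric])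
  finally show "let z = (\<Sum>i<d. \<Sum>j<d. cnj (v $ i) * (complex_of_real c \<cdot>\<^sub>m outer d u) $$ (i, j) * v $ j) in Im z = 0 \<and> Re z \<ge> 0"
    using assms by (simp add: Let_def)
qed

lemma mtrace_outer: "mtrace (outer d u) = complex_of_real (\<Sum>i<d. (cmod (u i))^2)"
  unfolding mtrace_def outer_def by (simp add: complex_norm_square[symmetric])

definition emat :: "nat \<Rightarrow> nat \<Rightarrow> nat \<Rightarrow> complex mat" where
  "emat d i j = mat d d (\<lambda>(r, c). if r = i \<and> c = j then 1 else 0)"

definition part :: "nat \<Rightarrow> complex mat \<Rightarrow> (nat \<times> nat) set \<Rightarrow> complex mat" where
  "part d A S = mat d d (\<lambda>(r, c). if (r, c) \<in> S then A $$ (r, c) else 0)"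

lemma func_zero:
  fixes F :: "complex mat \<Rightarrow> complex"
  assumes add: "\<And>A B. A \<in> carrier_mat d d \<Longrightarrow> B \<in> carrier_mat d d \<Longrightarrow> F (A + B) = F A + F B"
    and hom: "\<And>A c. A \<in> carrier_mat d d \<Longrightarrow> F (c \<cdot>\<^sub>m A) = c * F A"
    and base: "\<And>i j. i < d \<Longrightarrow> j < d \<Longrightarrow> F (emat d i j) = 0"
    and A: "A \<in> carrier_mat d d"
  shows "F A = 0"
proof -
  have "finite S \<Longrightarrow> S \<subseteq> {..<d} \<times> {..<d} \<Longrightarrow> F (part d A S) = 0" for S
  proof (induction S rule: finite_induct)
    case empty
    have "part d A {} = 0 \<cdot>\<^sub>m A" using A by (intro eq_matI) (auto simp: part_def)
    then show ?case using hom[OF A, of 0] by simp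
  next
    case (insert p S)
    obtain i j where p: "p = (i, j)" by fastforce
    have ij: "i < d" "j < d" using insert(4) p by auto
    have "part d A (insert p S) = part d A S + A $$ (i, j) \<cdot>\<^sub>m emat d i j"
      using insert(2) p by (intro eq_matI) (auto simp: part_def emat_def)
    moreover have "F (part d A S + A $$ (i, j) \<cdot>\<^sub>m emat d i j) = 0"
      using add[of "part d A S" "A $$ (i, j) \<cdot>\<^sub>m emat d i j"] hom[of "emat d i j"] base[OF ij] insert
      by (simp add: part_def emat_def)
    ultimately show ?case by simp
  qed
  moreover have "part d A ({..<d} \<times> {..<d}) = A" using A by (intro eq_matI) (auto simp: part_def)
  ultimately show ?thesis by (metis finite_SigmaI finite_lessThan order_refl)
qed

lemma ampliate_one:
  assumes "lin_map d Q" "M \<in> carrier_mat d d"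
  shows "ampliate d 1 Q M = Q M"
proof -
  have QM: "Q M \<in> carrier_mat d d" using assms unfolding lin_map_def by blast
  have "mat d d (\<lambda>(i, j). M $$ (0 * d + i, 0 * d + j)) = M" using assms(2) by (intro eq_matI) auto
  then show ?thesis using QM unfolding ampliate_def by (intro eq_matI) auto
qed

lemma cp_psd:
  assumes "completely_positive d Q" "psd d M"
  shows "psd d (Q M)"
proof -
  have h: "\<forall>n M. psd (n * d) M \<longrightarrow> psd (n * d) (ampliate d n Q M)" using assms unfolding completely_positive_def by blast
  have "psd (1 * d) (ampliate d 1 Q M)" using h[rule_format, of 1 M] assms(2) by (simp only: mult_1)
  then have "psd d (ampliate d 1 Q M)" by (simp only: mult_1)
  moreover have "M \<in> carrier_mat d d" using assms(2) unfolding psd_def by simp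
  ultimately show ?thesis using ampliate_one assms(1) unfolding completely_positive_def by simp
qed

definition up :: "nat \<Rightarrow> nat \<Rightarrow> complex \<Rightarrow> nat \<Rightarrow> complex" where
  "up i j a t = (if t = i then 1 else 0) + (if t = j then a else 0)"

lemma emat_polar:
  assumes "i < d" "j < d"
  shows "emat d i j = (((1/4) \<cdot>\<^sub>m outer d (up i j 1) + (\<i>/4) \<cdot>\<^sub>m outer d (up i j \<i>))
           + (-1/4) \<cdot>\<^sub>m outer d (up i j (-1))) + (-\<i>/4) \<cdot>\<^sub>m outer d (up i j (-\<i>))"
  by (intro eq_matI) (auto simp: emat_def outer_def up_def algebra_simps complex_eq_iff)

lemma lin_zero:
  assumes "lin_map d Q"
  shows "Q (0\<^sub>m d d) = 0\<^sub>m d d"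
proof -
  have c: "\<forall>A \<in> carrier_mat d d. Q A \<in> carrier_mat d d" and h: "\<forall>A \<in> carrier_mat d d. \<forall>c. Q (c \<cdot>\<^sub>m A) = c \<cdot>\<^sub>m Q A"
    using assms unfolding lin_map_def by blast+
  have "0\<^sub>m d d = (0::complex) \<cdot>\<^sub>m 0\<^sub>m d d" by (intro eq_matI) auto
  then have "Q (0\<^sub>m d d) = 0 \<cdot>\<^sub>m Q (0\<^sub>m d d)" using h by (metis zero_carrier_mat)
  also have "\<dots> = 0\<^sub>m d d" using c[rule_format, of "0\<^sub>m d d"] by (intro eq_matI) auto
  finally show ?thesis .
qed

lemma ep_diag:
  assumes ep: "energy_preserving d E" and A: "A \<in> carrier_mat d d" and k: "k < d"
  shows "E A $$ (k,k) = A $$ (k,k)"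
proof -
  have lin: "lin_map d E" using ep unfolding energy_preserving_def channel_def completely_positive_def by blast
  have c: "\<And>A. A \<in> carrier_mat d d \<Longrightarrow> E A \<in> carrier_mat d d"
    and ad: "\<And>A B. A \<in> carrier_mat d d \<Longrightarrow> B \<in> carrier_mat d d \<Longrightarrow> E (A + B) = E A + E B"
    and h: "\<And>A c. A \<in> carrier_mat d d \<Longrightarrow> E (c \<cdot>\<^sub>m A) = c \<cdot>\<^sub>m E A"
    using lin unfolding lin_map_def by blast+
  have dc: "\<And>\<rho>. density d \<rho> \<Longrightarrow> E \<rho> $$ (k,k) = \<rho> $$ (k,k)" using ep k unfolding energy_preserving_def by blast
  define F where "F = (\<lambda>A. E A $$ (k,k) - A $$ (k,k))"
  have Fadd: "F (A + B) = F A + F B" if "A \<in> carrier_mat d d" "B \<in> carrier_mat d d" for A B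
    using that c[OF that(1)] c[OF that(2)] ad[OF that] k unfolding F_def by simp
  have Fhom: "F (a \<cdot>\<^sub>m A) = a * F A" if "A \<in> carrier_mat d d" for A a
    using that c[OF that] h[OF that] k unfolding F_def by (simp add: algebra_simps)
  have Fout: "F (outer d u) = 0" for u
  proof -
    define s where "s = (\<Sum>t<d. (cmod (u t))^2)"
    have oc: "outer d u \<in> carrier_mat d d" unfolding outer_def by simp
    show ?thesis
    proof (cases "s = 0")
      case True
      then have "\<forall>t\<in>{..<d}. (cmod (u t))^2 = 0" using sum_nonneg_eq_0_iff[of "{..<d}" "\<lambda>t. (cmod (u t))^2"] True unfolding s_def by simp
      then have "outer d u = 0 \<cdot>\<^sub>m outer d u" by (intro eq_matI) (auto simp: outer_def)
      then show ?thesis using Fhom[OF oc, of 0] by simp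
    next
      case False
      have spos: "s > 0" using False unfolding s_def by (metis sum_nonneg zero_le_power2 order_le_less)
      define D where "D = complex_of_real (1/s) \<cdot>\<^sub>m outer d u"
      have pD: "psd d D" unfolding D_def by (rule psd_outer) (use spos in simp)
      have "mtrace D = (\<Sum>i<d. complex_of_real ((cmod (u i))^2 / s))"
        unfolding D_def mtrace_def
        by (rule sum.cong) (auto simp: outer_def complex_norm_square[symmetric])
      also have "\<dots> = complex_of_real ((\<Sum>i<d. (cmod (u i))^2) / s)"
        by (simp only: sum_divide_distrib of_real_sum)
      also have "\<dots> = 1" using spos unfolding s_def by simp
      finally have "mtrace D = 1" .
      moreover
      ultimately have "F D = 0" using dc pD unfolding F_def density_def by simp
      moreover have "outer d u = complex_of_real s \<cdot>\<^sub>m D" unfolding D_def using spos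
        by (intro eq_matI) (auto simp: outer_def)
      moreover have "D \<in> carrier_mat d d" unfolding D_def outer_def by simp
      ultimately show ?thesis using Fhom by simp
    qed
  qed
  have base: "F (emat d i j) = 0" if "i < d" "j < d" for i j
    unfolding emat_polar[OF that]
    by (simp add: Fadd Fhom Fout outer_carrier)
  show ?thesis using func_zero[of d F, OF Fadd Fhom base A] unfolding F_def by simp
qed

lemma ep_lin: "energy_preserving d E \<Longrightarrow> lin_map d E"
  unfolding energy_preserving_def channel_def completely_positive_def by blast

lemma ep_cp: "energy_preserving d E \<Longrightarrow> completely_positive d E"
  unfolding energy_preserving_def channel_def by blast

lemma ep_basis:
  assumes ep: "energy_preserving d E" and i: "i < d"
  shows "E (emat d i i) = emat d i i"
proof -
  have lin: "lin_map d E" using ep_lin[OF ep] .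
  have ec: "emat d i i \<in> carrier_mat d d" unfolding emat_def by simp
  have Bc: "E (emat d i i) \<in> carrier_mat d d" using lin ec unfolding lin_map_def by blast
  have "emat d i i = complex_of_real 1 \<cdot>\<^sub>m outer d (\<lambda>t. if t = i then 1 else 0)"
    by (intro eq_matI) (auto simp: emat_def outer_def)
  then have "psd d (emat d i i)" using psd_outer[of 1 d] by simp
  then have pB: "psd d (E (emat d i i))" using cp_psd[OF ep_cp[OF ep]] by blast
  have dB: "E (emat d i i) $$ (r, r) = (if r = i then 1 else 0)" if "r < d" for r
    using ep_diag[OF ep ec that] that by (simp add: emat_def)
  show ?thesis
  proof (intro eq_matI)
    fix r c assume r: "r < dim_row (emat d i i)" and c: "c < dim_col (emat d i i)"
    then have r': "r < d" and c': "c < d" by (auto simp: emat_def)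
    show "E (emat d i i) $$ (r, c) = emat d i i $$ (r, c)"
    proof (cases "r = i")
      case False
      then show ?thesis using psd_zero_diag[OF pB r' c'] dB[OF r'] r' c' by (simp add: emat_def)
    next
      case True
      show ?thesis
      proof (cases "c = i")
        case True
        then show ?thesis using dB[OF c'] \<open>r = i\<close> r' c' by (simp add: emat_def)
      next
        case False
        then show ?thesis using psd_zero_diag[OF pB c' r'] dB[OF c'] r' c' by (simp add: emat_def)
      qed
    qed
  qed (use Bc in \<open>auto simp: emat_def\<close>)
qed

definition dg :: "nat \<Rightarrow> complex mat \<Rightarrow> complex mat" where
  "dg d A = mat d d (\<lambda>(i, j). if i = j then A $$ (i, i) else 0)"

lemma ep_dg:
  assumes ep: "energy_preserving d E" and A: "A \<in> carrier_mat d d"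
  shows "E (dg d A) = dg d A"
proof -
  have lin: "lin_map d E" using ep_lin[OF ep] .
  have c: "\<And>A. A \<in> carrier_mat d d \<Longrightarrow> E A \<in> carrier_mat d d"
    and ad: "\<And>A B. A \<in> carrier_mat d d \<Longrightarrow> B \<in> carrier_mat d d \<Longrightarrow> E (A + B) = E A + E B"
    and h: "\<And>A c. A \<in> carrier_mat d d \<Longrightarrow> E (c \<cdot>\<^sub>m A) = c \<cdot>\<^sub>m E A"
    using lin unfolding lin_map_def by blast+
  have dgc: "dg d A \<in> carrier_mat d d" for A :: "complex mat" unfolding dg_def by simp
  have dgadd: "dg d (A + B) = dg d A + dg d B" if "A \<in> carrier_mat d d" "B \<in> carrier_mat d d" for A B :: "complex mat"
    using that by (intro eq_matI) (auto simp: dg_def)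
  have dghom: "dg d (a \<cdot>\<^sub>m A) = a \<cdot>\<^sub>m dg d A" if "A \<in> carrier_mat d d" for A :: "complex mat" and a
    using that by (intro eq_matI) (auto simp: dg_def)
  have ent: "E (dg d A) $$ (r, s) = dg d A $$ (r, s)" if rs: "r < d" "s < d" for r s
  proof -
    define G where "G = (\<lambda>A. E (dg d A) $$ (r, s) - dg d A $$ (r, s))"
    have Gadd: "G (A + B) = G A + G B" if "A \<in> carrier_mat d d" "B \<in> carrier_mat d d" for A B :: "complex mat"
      using c[OF dgc, of A] c[OF dgc, of B] rs unfolding G_def dgadd[OF that] ad[OF dgc dgc]
      by (simp add: dg_def)
    have Ghom: "G (a \<cdot>\<^sub>m A) = a * G A" if "A \<in> carrier_mat d d" for A :: "complex mat" and a
      using c[OF dgc, of A] rs unfolding G_def dghom[OF that] h[OF dgc]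
      by (simp add: dg_def algebra_simps)
    have Gbase: "G (emat d i j) = 0" if ij: "i < d" "j < d" for i j
    proof (cases "i = j")
      case True
      have "dg d (emat d i j) = emat d i i" using True by (intro eq_matI) (auto simp: dg_def emat_def)
      then show ?thesis using ep_basis[OF ep ij(1)] unfolding G_def by simp
    next
      case False
      have "dg d (emat d i j) = 0\<^sub>m d d" using False by (intro eq_matI) (auto simp: dg_def emat_def)
      then show ?thesis using lin_zero[OF lin] unfolding G_def by simp
    qed
    show ?thesis using func_zero[of d G, OF Gadd Ghom Gbase A] unfolding G_def by simp
  qed
  show ?thesis using ent c[OF dgc] by (intro eq_matI) (auto simp: dg_def)
qed

lemma passivization_carrier: "passivization d A \<in> carrier_mat d d"
  unfolding passivization_def by simp

lemma dg_passivization: "dg d (passivization d A) = passivization d A"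
  by (intro eq_matI) (auto simp: dg_def passivization_def tau_def)

lemma ep_cov:
  assumes ep: "energy_preserving d E"
  shows "passivization_covariant d E"
  unfolding passivization_covariant_def operation_def
proof (intro conjI allI impI ballI)
  show "completely_positive d E" using ep_cp[OF ep] .
  fix \<rho> assume "psd d \<rho>"
  then have "\<rho> \<in> carrier_mat d d" unfolding psd_def by simp
  then show "Re (mtrace (E \<rho>)) \<le> Re (mtrace \<rho>)" using ep unfolding energy_preserving_def channel_def by simp
next
  fix A :: "complex mat" assume A: "A \<in> carrier_mat d d"
  have EAc: "E A \<in> carrier_mat d d" using ep_lin[OF ep] A unfolding lin_map_def by blast
  have "passivization d (E A) = passivization d A"
    unfolding passivization_def
    by (intro eq_matI) (auto simp: ep_diag[OF ep A] intro!: sum.cong)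
  moreover have "E (passivization d A) = passivization d A"
    using ep_dg[OF ep passivization_carrier, of A] dg_passivization by simp
  ultimately show "E (passivization d A) = passivization d (E A)" by simp
qed

lemma sum_from:
  fixes f :: "nat \<Rightarrow> real"
  shows "(\<Sum>k<d. if i \<le> k then f k else 0) = (\<Sum>k=i..<d. f k)"
proof -
  have "(\<Sum>k<d. if i \<le> k then f k else 0) = sum f ({..<d} \<inter> {k. i \<le> k}) + sum (\<lambda>_. 0) ({..<d} \<inter> - {k. i \<le> k})"
    by (rule sum.If_cases) simp
  also have "{..<d} \<inter> {k. i \<le> k} = {i..<d}" by auto
  finally show ?thesis by simp
qed

lemma telescope:
  fixes g :: "nat \<Rightarrow> real"
  assumes "i \<le> d"
  shows "(\<Sum>k=i..<d. g k - g (Suc k)) = g i - g d"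
proof -
  have "(\<Sum>k=i..<d. g k - g (Suc k)) = - (\<Sum>k=i..<d. g (Suc k) - g k)"
    by (simp add: sum_negf[symmetric])
  also have "\<dots> = g i - g d" using sum_Suc_diff'[OF assms, of g] by simp
  finally show ?thesis .
qed

lemma passive_dmat:
  assumes "\<And>i. i < d \<Longrightarrow> r i \<ge> 0" "(\<Sum>i<d. r i) = 1"
    and "\<And>i j. i \<le> j \<Longrightarrow> j < d \<Longrightarrow> r j \<le> r i"
  shows "passive_state d (dmat d r)"
  unfolding passive_state_def density_def
  using psd_dmat[of d r] assms mtrace_dmat[of d r] by (auto simp: dmat_def)

lemma pc_passive:
  assumes pc: "passivization_covariant d Q" and tp: "passive_state d \<tau>"
  shows "\<exists>c :: real. \<exists>\<tau>'. c \<ge> 0 \<and> passive_state d \<tau>' \<and> Q \<tau> = complex_of_real c \<cdot>\<^sub>m \<tau>'"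
proof -
  obtain p where teq: "\<tau> = dmat d p" and mono: "\<And>i j. i \<le> j \<Longrightarrow> j < d \<Longrightarrow> p j \<le> p i"
    using tp unfolding passive_state_def dmat_def by blast
  have dens: "density d \<tau>" using tp unfolding passive_state_def by blast
  have dpos: "d > 0"
  proof (rule ccontr)
    assume "\<not> d > 0"
    then have "d = 0" by simp
    then have "mtrace \<tau> = 0" unfolding teq mtrace_def dmat_def by simp
    then show False using dens unfolding density_def by simp
  qed
  have "Re (\<tau> $$ (d - 1, d - 1)) \<ge> 0" using psd_diag_entry[of d \<tau> "d - 1"] dens dpos unfolding density_def by simp
  then have plast: "p (d - 1) \<ge> 0" using dpos unfolding teq dmat_def by simp
  have pnn: "p i \<ge> 0" if "i < d" for i
  proof -
    have "i \<le> d - 1" "d - 1 < d" using that dpos by auto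
    then show ?thesis using mono[of i "d - 1"] plast by linarith
  qed
  define p' where "p' = (\<lambda>k. if k < d then p k else 0)"
  define q where "q = (\<lambda>k. real (k + 1) * (p' k - p' (Suc k)))"
  have qnn: "q k \<ge> 0" if "k < d" for k
  proof -
    have "p' (Suc k) \<le> p' k" using that mono[of k "Suc k"] pnn[of k] unfolding p'_def by auto
    then show ?thesis unfolding q_def by simp
  qed
  define \<sigma> where "\<sigma> = dmat d q"
  have sc: "\<sigma> \<in> carrier_mat d d" unfolding \<sigma>_def dmat_def by simp
  have ps: "psd d \<sigma>" unfolding \<sigma>_def using psd_dmat qnn by blast
  have pis: "passivization d \<sigma> = \<tau>"
  proof (intro eq_matI)
    fix i j assume "i < dim_row \<tau>" "j < dim_col \<tau>"
    then have ij: "i < d" "j < d" unfolding teq dmat_def by auto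
    have "passivization d \<sigma> $$ (i, j) = (\<Sum>k<d. complex_of_real (q k) * tau d k $$ (i, j))"
      unfolding passivization_def \<sigma>_def using ij by (auto simp: dmat_def intro!: sum.cong)
    also have "\<dots> = (if i = j then complex_of_real (\<Sum>k<d. if i \<le> k then q k / real (k + 1) else 0) else 0)"
      using ij by (auto simp: tau_def of_real_sum intro!: sum.cong)
    also have "(\<Sum>k<d. if i \<le> k then q k / real (k + 1) else 0) = (\<Sum>k=i..<d. p' k - p' (Suc k))"
      unfolding sum_from q_def by simp
    also have "\<dots> = p i" using telescope[of i d p'] ij unfolding p'_def by simp
    finally show "passivization d \<sigma> $$ (i, j) = \<tau> $$ (i, j)" using ij unfolding teq dmat_def by simp
  qed (auto simp: teq dmat_def passivization_def)
  have op: "operation d Q" using pc unfolding passivization_covariant_def by blast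
  have lin: "lin_map d Q" using op unfolding operation_def completely_positive_def by blast
  define B where "B = Q \<sigma>"
  have pB: "psd d B" unfolding B_def using cp_psd[OF _ ps] op unfolding operation_def by blast
  have Bc: "B \<in> carrier_mat d d" using pB unfolding psd_def by blast
  have Qt: "Q \<tau> = passivization d B" unfolding B_def using pis pc sc unfolding passivization_covariant_def by metis
  define w where "w = (\<lambda>k. Re (B $$ (k, k)))"
  have Bd: "B $$ (k, k) = complex_of_real (w k)" if "k < d" for k
    using psd_diag_entry[OF pB that] unfolding w_def by (simp add: complex_eq_iff)
  have wnn: "w k \<ge> 0" if "k < d" for k using psd_diag_entry[OF pB that] unfolding w_def by simp
  define r where "r = (\<lambda>i. \<Sum>k<d. if i \<le> k then w k / real (k + 1) else 0)"
  have PB: "passivization d B = dmat d r"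
  proof (intro eq_matI)
    fix i j assume "i < dim_row (dmat d r)" "j < dim_col (dmat d r)"
    then have ij: "i < d" "j < d" unfolding dmat_def by auto
    have "passivization d B $$ (i, j) = (\<Sum>k<d. complex_of_real (w k) * tau d k $$ (i, j))"
      unfolding passivization_def using ij by (auto simp: Bd intro!: sum.cong)
    also have "\<dots> = (if i = j then complex_of_real (r i) else 0)"
      using ij unfolding r_def by (auto simp: tau_def of_real_sum intro!: sum.cong)
    finally show "passivization d B $$ (i, j) = dmat d r $$ (i, j)" using ij unfolding dmat_def by simp
  qed (auto simp: dmat_def passivization_def)
  have rnn: "r i \<ge> 0" for i unfolding r_def by (intro sum_nonneg) (auto simp: wnn)
  have rmono: "r j \<le> r i" if "i \<le> j" for i j
    unfolding r_def by (intro sum_mono) (use that in \<open>auto simp: wnn\<close>)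
  define c where "c = (\<Sum>i<d. r i)"
  have cnn: "c \<ge> 0" unfolding c_def by (intro sum_nonneg) (simp add: rnn)
  show ?thesis
  proof (cases "c = 0")
    case True
    then have r0: "r i = 0" if "i < d" for i
      using sum_nonneg_eq_0_iff[of "{..<d}" r] rnn that unfolding c_def by simp
    define t where "t = (\<lambda>k::nat. if k = 0 then (1::real) else 0)"
    have "passive_state d (dmat d t)"
      by (rule passive_dmat) (use dpos in \<open>auto simp: t_def\<close>)
    moreover have "Q \<tau> = complex_of_real 0 \<cdot>\<^sub>m dmat d t"
      unfolding Qt PB by (intro eq_matI) (auto simp: dmat_def r0)
    ultimately show ?thesis by blast
  next
    case False
    then have cpos: "c > 0" using cnn by simp
    have "passive_state d (dmat d (\<lambda>i. r i / c))"
    proof (rule passive_dmat)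
      show "(\<Sum>i<d. r i / c) = 1" using cpos unfolding c_def by (simp add: sum_divide_distrib[symmetric])
    qed (use cpos rnn rmono in \<open>auto intro: divide_right_mono\<close>)
    moreover have "Q \<tau> = complex_of_real c \<cdot>\<^sub>m dmat d (\<lambda>i. r i / c)"
      unfolding Qt PB using cpos by (intro eq_matI) (auto simp: dmat_def)
    ultimately show ?thesis using cnn by blast
  qed
qed

theorem mainTheorem19:
  fixes d :: nat
  shows "(\<forall>Q. passivization_covariant d Q \<longrightarrow>
            (\<forall>\<tau>. passive_state d \<tau> \<longrightarrow>
               (\<exists>c :: real. \<exists>\<tau>'. c \<ge> 0 \<and> passive_state d \<tau>' \<and> Q \<tau> = complex_of_real c \<cdot>\<^sub>m \<tau>')))
       \<and> (\<forall>E. energy_preserving d E \<longrightarrow> passivization_covariant d E)"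
  using pc_passive ep_cov by blast

end
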